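(* Let $f(\mathbf{x})=f_0+\sum_{\alpha\in U^n_{2d}}f_\alpha\mathbf{x}^\alpha$ be a real polynomial of degree $2d$ in $\mathbf{x}\in\mathbb{R}^n$, where $U^n_{2d}=\{\alpha\in\mathbb{N}^n:0<|\alpha|\le2d\}$. Let $[\mathbf{x}]_d\in\mathbb{R}^{N}$, $N=\binom{n+d}{d}$, be the vector of all monomials of degree at most $d$ (in a fixed order, first entry $1$), and suppose $N=mp$ with integers $m\ge1$, $p\ne1$; set $[\mathcal{X}]_d=\mathrm{fold}([\mathbf{x}]_d)\in\mathbb{R}^{m\times1\times p}$. Define $\gamma_{sdp}=\sup\{\gamma\in\mathbb{R}:\exists\,X\in\mathbb{R}^{N\times N}\text{ symmetric PSD with } f(\mathbf{x})-\gamma=X\bullet([\mathbf{x}]_d[\mathbf{x}]_d^\top)\ \forall\mathbf{x}\in\mathbb{R}^n\}$ (the SDP relaxation) and $\gamma_{tsdp}=\sup\{\gamma\in\mathbb{R}:\exists\,\mathcal{X}\in S\mathbb{R}^{m\times m\times p}_+\text{ with } f(\mathbf{x})-\gamma=\langle\mathcal{X},[\mathcal{X}]_d*[\mathcal{X}]_d^\top\rangle\ \forall\mathbf{x}\in\mathbb{R}^n\}$ (the TSDP relaxation), and put $f^{uc}_{sdp}=f_0-\gamma_{sdp}$, $f^{uc}_{tsdp}=f_0-\gamma_{tsdp}$. Assume both suprema are finite and attained. Then $f^{uc}_{sdp}\le f^{uc}_{tsdp}$, and $f^{uc}_{sdp}=f^{uc}_{tsdp}$ if and only if there exists an optimal matrix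 $X^*$ of the SDP relaxation (a symmetric PSD $X^*$ with $f(\mathbf{x})-\gamma_{sdp}=X^*\bullet([\mathbf{x}]_d[\mathbf{x}]_d^\top)$ for all $\mathbf{x}$) which is $p$-block circulant, i.e. $X^*=\mathrm{bcirc}(\mathcal{Y})$ for some $\mathcal{Y}\in\mathbb{R}^{m\times m\times p}$.
   Context: For $\mathcal{A}\in\mathbb{R}^{m\times n\times p}$ let $A^{(k)}\in\mathbb{R}^{m\times n}$ ($k\in[p]$) be its frontal slices, $(A^{(k)})_{ij}=a_{ijk}$. $\mathrm{bcirc}(\mathcal{A})\in\mathbb{R}^{mp\times np}$ is the block circulant matrix whose $(i,j)$ block ($i,j\in[p]$) is $A^{(((i-j)\bmod p)+1)}$. $\mathrm{unfold}(\mathcal{A})\in\mathbb{R}^{mp\times n}$ stacks $A^{(1)},\dots,A^{(p)}$ vertically, $\mathrm{fold}$ is its inverse (so a vector in $\mathbb{R}^{mp}$ is folded into an $m\times1\times p$ tensor whose $k$-th frontal slice is the $k$-th block of length $m$), and the T-product is $\mathcal{A}*\mathcal{B}=\mathrm{fold}(\mathrm{bcirc}(\mathcal{A})\,\mathrm{unfold}(\mathcal{B}))$. The transpose $\mathcal{A}^\top$ has frontal slices $(A^{(1)})^\top,(A^{(p)})^\top,\dots,(A^{(2)})^\top$; $S\mathbb{R}^{n\times n\times p}$ is the set of $\mathcal{A}\in\mathbb{R}^{n\times n\times p}$ with $\mathcal{A}^\top=\mathcal{A}$. The inner product is $\langle\mathcal{A},\mathcal{B}\rangle=\sum a_{ijk}b_{ijk}$,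 and $X\bullet Y=\sum_{ij}X_{ij}Y_{ij}$ for matrices. $S\mathbb{R}^{m\times m\times p}_+$ is the set of symmetric T-positive semidefinite tensors: $\mathcal{A}\in S\mathbb{R}^{m\times m\times p}$ with $\langle\mathcal{Z},\mathcal{A}*\mathcal{Z}\rangle\ge0$ for all $\mathcal{Z}\in\mathbb{R}^{m\times1\times p}$. $\mathbf{x}^\alpha=x_1^{\alpha_1}\cdots x_n^{\alpha_n}$, $|\alpha|=\sum\alpha_i$. *)

theory Defs
  imports Complex_Main "Jordan_Normal_Form.Matrix"
begin

definition multi_idx :: "nat \<Rightarrow> nat \<Rightarrow> (nat \<Rightarrow> nat) set" where
  "multi_idx n k = {\<alpha>. (\<forall>i\<ge>n. \<alpha> i = 0) \<and> (\<Sum>i<n. \<alpha> i) \<le> k}"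

definition absidx :: "nat \<Rightarrow> (nat \<Rightarrow> nat) \<Rightarrow> nat" where
  "absidx n \<alpha> = (\<Sum>i<n. \<alpha> i)"

definition monomial :: "nat \<Rightarrow> (nat \<Rightarrow> real) \<Rightarrow> (nat \<Rightarrow> nat) \<Rightarrow> real" where
  "monomial n x \<alpha> = (\<Prod>i<n. x i ^ \<alpha> i)"

text \<open>Polynomial with coefficient function c, evaluated at x in R^n (only x 0..x (n-1) matter).
  The constant term f_0 is c applied to the zero multi-index.\<close>
definition poly_eval :: "nat \<Rightarrow> nat \<Rightarrow> ((nat \<Rightarrow> nat) \<Rightarrow> real) \<Rightarrow> (nat \<Rightarrow> real) \<Rightarrow> real" where
  "poly_eval n k c x = (\<Sum>\<alpha>\<in>multi_idx n k. c \<alpha> * monomial n x \<alpha>)"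

definition monvec :: "nat \<Rightarrow> nat \<Rightarrow> (nat \<Rightarrow> (nat \<Rightarrow> nat)) \<Rightarrow> (nat \<Rightarrow> real) \<Rightarrow> real vec" where
  "monvec n N omon x = vec N (\<lambda>i. monomial n x (omon i))"

definition frob :: "real mat \<Rightarrow> real mat \<Rightarrow> real" (infixl "\<bullet>\<^sub>F" 70) where
  "frob X Y = (\<Sum>i<dim_row X. \<Sum>j<dim_col X. X $$ (i,j) * Y $$ (i,j))"

definition outer_self :: "real vec \<Rightarrow> real mat" where
  "outer_self v = mat (dim_vec v) (dim_vec v) (\<lambda>(i,j). v $ i * v $ j)"

definition psd_mat :: "nat \<Rightarrow> real mat \<Rightarrow> bool" where
  "psd_mat N X \<longleftrightarrow> X \<in> carrier_mat N N \<and> transpose_mat X = X \<and>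
     (\<forall>v \<in> carrier_vec N. v \<bullet> (X *\<^sub>v v) \<ge> 0)"

text \<open>A tensor in R^{m x n x p} is a function a i j k (0-based indices i<m, j<n, k<p);
  frontal slice k (0-based) is A^(k+1). Values outside the index range are irrelevant.\<close>
type_synonym tensor = "nat \<Rightarrow> nat \<Rightarrow> nat \<Rightarrow> real"

definition bcirc :: "nat \<Rightarrow> nat \<Rightarrow> nat \<Rightarrow> tensor \<Rightarrow> real mat" where
  "bcirc m n p A = mat (m*p) (n*p)
     (\<lambda>(r,c). A (r mod m) (c mod n) (nat ((int (r div m) - int (c div n)) mod int p)))"

definition tunfold :: "nat \<Rightarrow> nat \<Rightarrow> nat \<Rightarrow> tensor \<Rightarrow> real mat" where
  "tunfold m n p A = mat (m*p) n (\<lambda>(r,c). A (r mod m) c (r div m))"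

definition tfold :: "nat \<Rightarrow> real mat \<Rightarrow> tensor" where
  "tfold m M = (\<lambda>i j k. M $$ (k*m + i, j))"

definition tprod :: "nat \<Rightarrow> nat \<Rightarrow> nat \<Rightarrow> nat \<Rightarrow> tensor \<Rightarrow> tensor \<Rightarrow> tensor" where
  "tprod m n l p A B = tfold m (bcirc m n p A * tunfold n l p B)"

text \<open>Transpose: slices (A^(1))^T, (A^(p))^T, ..., (A^(2))^T.\<close>
definition ttrans :: "nat \<Rightarrow> tensor \<Rightarrow> tensor" where
  "ttrans p A = (\<lambda>i j k. A j i ((p - k) mod p))"

definition tinner :: "nat \<Rightarrow> nat \<Rightarrow> nat \<Rightarrow> tensor \<Rightarrow> tensor \<Rightarrow> real" where
  "tinner m n p A B = (\<Sum>i<m. \<Sum>j<n. \<Sum>k<p. A i j k * B i j k)"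

definition tsym :: "nat \<Rightarrow> nat \<Rightarrow> tensor \<Rightarrow> bool" where
  "tsym m p A \<longleftrightarrow> (\<forall>i<m. \<forall>j<m. \<forall>k<p. ttrans p A i j k = A i j k)"

definition tpsd :: "nat \<Rightarrow> nat \<Rightarrow> tensor \<Rightarrow> bool" where
  "tpsd m p A \<longleftrightarrow> tsym m p A \<and>
     (\<forall>Z :: tensor. tinner m 1 p Z (tprod m m 1 p A Z) \<ge> 0)"

definition col_of_vec :: "real vec \<Rightarrow> real mat" where
  "col_of_vec v = mat (dim_vec v) 1 (\<lambda>(i,j). v $ i)"

definition tfold_vec :: "nat \<Rightarrow> real vec \<Rightarrow> tensor" where
  "tfold_vec m v = tfold m (col_of_vec v)"

definition sdp_feasible :: "nat \<Rightarrow> nat \<Rightarrow> ((nat \<Rightarrow> nat) \<Rightarrow> real) \<Rightarrow> nat \<Rightarrow>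
    (nat \<Rightarrow> (nat \<Rightarrow> nat)) \<Rightarrow> real set" where
  "sdp_feasible n d c N omon = {\<gamma>. \<exists>X. psd_mat N X \<and>
     (\<forall>x. poly_eval n (2*d) c x - \<gamma> = X \<bullet>\<^sub>F outer_self (monvec n N omon x))}"

definition tsdp_feasible :: "nat \<Rightarrow> nat \<Rightarrow> ((nat \<Rightarrow> nat) \<Rightarrow> real) \<Rightarrow> nat \<Rightarrow>
    (nat \<Rightarrow> (nat \<Rightarrow> nat)) \<Rightarrow> nat \<Rightarrow> nat \<Rightarrow> real set" where
  "tsdp_feasible n d c N omon m p = {\<gamma>. \<exists>\<X>. tpsd m p \<X> \<and>
     (\<forall>x. poly_eval n (2*d) c x - \<gamma> =
        tinner m m p \<X> (tprod m 1 m p (tfold_vec m (monvec n N omon x))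
                                       (ttrans p (tfold_vec m (monvec n N omon x)))))}"

end

theory Submission
  imports Defs
begin
lemma sum_split_mp:
  fixes m p :: nat assumes "0 < m"
  shows "(\<Sum>r<m*p. g r) = (\<Sum>a<p. \<Sum>i<m. g (a*m+i))"
proof -
  have "(\<Sum>a<p. \<Sum>i<m. g (a*m+i)) = (\<Sum>(a,i)\<in>{..<p}\<times>{..<m}. g (a*m+i))"
    by (simp add: sum.cartesian_product)
  also have "\<dots> = (\<Sum>r<m*p. g r)"
  proof (rule sum.reindex_bij_witness[where i="\<lambda>r. (r div m, r mod m)" and j="\<lambda>(a,i). a*m+i"])
    fix ai assume "ai \<in> {..<p}\<times>{..<m}"
    then obtain a i where ai: "ai = (a,i)" "a<p" "i<m" by auto
    show "((case ai of (a, i) \<Rightarrow> a * m + i) div m, (case ai of (a, i) \<Rightarrow> a * m + i) mod m) = ai" using ai assms by simp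
    have "a*m+i < (a+1)*m" using ai by simp
    also have "\<dots> \<le> p*m" using ai by (intro mult_right_mono) auto
    finally show "(case ai of (a, i) \<Rightarrow> a * m + i) \<in> {..<m*p}" using ai by (simp add: mult.commute)
  next
    fix r show "(case (r div m, r mod m) of (a, i) \<Rightarrow> a * m + i) = r" by simp
  next
    fix r assume "r \<in> {..<m*p}"
    then show "(r div m, r mod m) \<in> {..<p}\<times>{..<m}" using assms
      by (auto simp: less_mult_imp_div_less mult.commute)
  qed (auto)
  finally show ?thesis by simp
qed

lemma int_pl: "0 < (p::nat) \<Longrightarrow> l < p \<Longrightarrow> int ((p - l) mod p) = (- int l) mod int p"
proof (cases "l = 0")
  case True then show ?thesis by simp
next
  case False
  assume "0<p" "l<p"
  then have "(p - l) mod p = p - l" using False by simp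
  moreover have "(- int l) mod int p = int p - int l"
    using False \<open>l<p\<close> by (simp add: zmod_zminus1_eq_if)
  ultimately show ?thesis using \<open>l<p\<close> by simp
qed

lemma int_natmod: "0 < p \<Longrightarrow> int (nat (x mod int p)) = x mod int p" by simp

lemma phi_inv:
  fixes p k l :: nat assumes p: "0<p" and kl: "k<p" "l<p"
  shows "nat ((int k - int l) mod int p) < p" "(p - l) mod p < p"
    "nat ((int (nat ((int k - int l) mod int p)) - int ((p - l) mod p)) mod int p) = k"
    "(p - (p - l) mod p) mod p = l"
proof -
  show "nat ((int k - int l) mod int p) < p" using p by (simp add: nat_less_iff)
  show "(p - l) mod p < p" using p by simp
  have e1: "int (nat ((int k - int l) mod int p)) = (int k - int l) mod int p" using p by simp
  have e2: "int ((p - l) mod p) = (- int l) mod int p" using int_pl[OF p kl(2)] .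
  have "((int k - int l) mod int p - (- int l) mod int p) mod int p = ((int k - int l) - (- int l)) mod int p"
    by (simp add: mod_diff_eq)
  also have "\<dots> = int k" using kl by simp
  finally show "nat ((int (nat ((int k - int l) mod int p)) - int ((p - l) mod p)) mod int p) = k"
    using e1 e2 by simp
  have lt: "(p - l) mod p < p" using p by simp
  have "int ((p - (p - l) mod p) mod p) = (- int ((p - l) mod p)) mod int p" using int_pl[OF p lt] .
  also have "\<dots> = (- ((- int l) mod int p)) mod int p" using e2 by simp
  also have "\<dots> = (- (- int l)) mod int p" by (simp add: mod_minus_eq)
  also have "\<dots> = int l" using kl by simp
  finally show "(p - (p - l) mod p) mod p = l" by simp
qed

lemma idx_lt: fixes m p k i :: nat assumes "k<p" "i<m" shows "k*m+i < m*p"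
proof -
  have "k*m+i < (k+1)*m" using assms by simp
  also have "\<dots> \<le> p*m" using assms by (intro mult_right_mono) auto
  finally show ?thesis by (simp add: mult.commute)
qed

lemma tfold_vec_entry: "k*m+i < dim_vec v \<Longrightarrow> tfold_vec m v i 0 k = v $ (k*m+i)"
  by (simp add: tfold_vec_def tfold_def col_of_vec_def)

lemma tprod_entry:
  fixes m p i j k :: nat
  assumes v: "dim_vec v = m*p" and m: "0<m" and p: "0<p" and ijk: "i<m" "j<m" "k<p"
  shows "tprod m 1 m p (tfold_vec m v) (ttrans p (tfold_vec m v)) i j k
     = (\<Sum>l<p. v $ (nat((int k - int l) mod int p)*m + i) * v $ (((p-l) mod p)*m + j))"
proof -
  let ?F = "tfold_vec m v"
  have r: "k*m+i < m*p" using idx_lt ijk by blast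
  have "tprod m 1 m p ?F (ttrans p ?F) i j k = (bcirc m 1 p ?F * tunfold 1 m p (ttrans p ?F)) $$ (k*m+i, j)"
    by (simp add: tprod_def tfold_def)
  also have "\<dots> = (\<Sum>l\<in>{0..<p}. bcirc m 1 p ?F $$ (k*m+i, l) * tunfold 1 m p (ttrans p ?F) $$ (l, j))"
    using r ijk by (simp add: bcirc_def tunfold_def scalar_prod_def)
  also have "\<dots> = (\<Sum>l<p. v $ (nat((int k - int l) mod int p)*m + i) * v $ (((p-l) mod p)*m + j))"
  proof (rule sum.cong)
    fix l assume l: "l \<in> {..<p}"
    have a1: "nat((int k - int l) mod int p) < p" using p by (simp add: nat_less_iff)
    have a2: "(p-l) mod p < p" using p by simp
    have "bcirc m 1 p ?F $$ (k*m+i, l) = ?F i 0 (nat((int k - int l) mod int p))"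
      using r l m ijk by (simp add: bcirc_def)
    also have "\<dots> = v $ (nat((int k - int l) mod int p)*m + i)"
      using tfold_vec_entry idx_lt[OF a1 ijk(1)] v by simp
    finally have b1: "bcirc m 1 p ?F $$ (k*m+i, l) = v $ (nat((int k - int l) mod int p)*m + i)" .
    have "tunfold 1 m p (ttrans p ?F) $$ (l, j) = ?F j 0 ((p-l) mod p)"
      using l ijk by (simp add: tunfold_def ttrans_def)
    also have "\<dots> = v $ (((p-l) mod p)*m + j)"
      using tfold_vec_entry idx_lt[OF a2 ijk(2)] v by simp
    finally show "bcirc m 1 p ?F $$ (k*m+i, l) * tunfold 1 m p (ttrans p ?F) $$ (l, j) = v $ (nat((int k - int l) mod int p)*m + i) * v $ (((p-l) mod p)*m + j)"
      using b1 by simp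
  qed (auto)
  finally show ?thesis .
qed

lemma pair_reindex:
  fixes p :: nat and G :: "nat \<Rightarrow> nat \<Rightarrow> real" and X :: "nat \<Rightarrow> real"
  assumes p: "0<p"
  shows "(\<Sum>k<p. \<Sum>l<p. X k * (A (nat((int k - int l) mod int p)) * B ((p-l) mod p)))
       = (\<Sum>a<p. \<Sum>b<p. X (nat((int a - int b) mod int p)) * (A a * B b))"
proof -
  let ?phi = "\<lambda>(k,l). (nat((int k - int l) mod int p), (p-l) mod p)"
  have "(\<Sum>k<p. \<Sum>l<p. X k * (A (nat((int k - int l) mod int p)) * B ((p-l) mod p)))
     = (\<Sum>(k,l)\<in>{..<p}\<times>{..<p}. X k * (A (nat((int k - int l) mod int p)) * B ((p-l) mod p)))"
    by (simp add: sum.cartesian_product)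
  also have "\<dots> = (\<Sum>(a,b)\<in>{..<p}\<times>{..<p}. X (nat((int a - int b) mod int p)) * (A a * B b))"
  proof (rule sum.reindex_bij_witness[where i="?phi" and j="?phi"])
    fix kl assume "kl \<in> {..<p}\<times>{..<p}"
    then obtain k l where kl: "kl = (k,l)" "k<p" "l<p" by auto
    note f = phi_inv[OF p kl(2,3)]
    show "?phi (?phi kl) = kl" using kl f by simp
    show "?phi kl \<in> {..<p}\<times>{..<p}" using kl f by simp
    show "?phi (?phi kl) = kl" using kl f by simp
    show "?phi kl \<in> {..<p}\<times>{..<p}" using kl f by simp
    show "(case ?phi kl of (a,b) \<Rightarrow> X (nat((int a - int b) mod int p)) * (A a * B b))
       = (case kl of (k,l) \<Rightarrow> X k * (A (nat((int k - int l) mod int p)) * B ((p-l) mod p)))"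
      using kl f by simp
  qed
  also have "\<dots> = (\<Sum>a<p. \<Sum>b<p. X (nat((int a - int b) mod int p)) * (A a * B b))"
    by (simp add: sum.cartesian_product)
  finally show ?thesis .
qed

lemma key_identity:
  fixes m p :: nat and X :: tensor
  assumes v: "dim_vec v = m*p" and m: "0<m" and p: "0<p"
  shows "tinner m m p X (tprod m 1 m p (tfold_vec m v) (ttrans p (tfold_vec m v)))
       = bcirc m m p X \<bullet>\<^sub>F outer_self v"
proof -
  let ?G = "\<lambda>i j a b. X i j (nat((int a - int b) mod int p)) * (v $ (a*m+i) * v $ (b*m+j))"
  have "tinner m m p X (tprod m 1 m p (tfold_vec m v) (ttrans p (tfold_vec m v)))
     = (\<Sum>i<m. \<Sum>j<m. \<Sum>k<p. \<Sum>l<p. X i j k * (v $ (nat((int k - int l) mod int p)*m + i) * v $ (((p-l) mod p)*m + j)))"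
    unfolding tinner_def
    by (intro sum.cong refl) (simp add: tprod_entry[OF v m p] sum_distrib_left del: One_nat_def)
  also have "\<dots> = (\<Sum>i<m. \<Sum>j<m. \<Sum>a<p. \<Sum>b<p. ?G i j a b)"
    by (intro sum.cong refl pair_reindex[OF p])
  also have "\<dots> = (\<Sum>a<p. \<Sum>i<m. \<Sum>b<p. \<Sum>j<m. ?G i j a b)"
  proof -
    have "(\<Sum>i<m. \<Sum>j<m. \<Sum>a<p. \<Sum>b<p. ?G i j a b) = (\<Sum>i<m. \<Sum>a<p. \<Sum>j<m. \<Sum>b<p. ?G i j a b)"
      by (intro sum.cong refl sum.swap)
    also have "\<dots> = (\<Sum>a<p. \<Sum>i<m. \<Sum>j<m. \<Sum>b<p. ?G i j a b)"
      by (rule sum.swap)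
    also have "\<dots> = (\<Sum>a<p. \<Sum>i<m. \<Sum>b<p. \<Sum>j<m. ?G i j a b)"
      by (intro sum.cong refl sum.swap)
    finally show ?thesis .
  qed
  also have "\<dots> = (\<Sum>r<m*p. \<Sum>c<m*p. X (r mod m) (c mod m) (nat((int (r div m) - int (c div m)) mod int p)) * (v $ r * v $ c))"
    using m by (simp add: sum_split_mp[OF m])
  also have "\<dots> = bcirc m m p X \<bullet>\<^sub>F outer_self v"
    unfolding frob_def
    by (intro sum.cong) (auto simp: bcirc_def outer_self_def v)
  finally show ?thesis .
qed

lemma quad_form:
  fixes m p :: nat and Y Z :: tensor
  assumes m: "0<m" and p: "0<p"
  shows "tinner m 1 p Z (tprod m m 1 p Y Z)
    = vec (m*p) (\<lambda>r. Z (r mod m) 0 (r div m)) \<bullet> (bcirc m m p Y *\<^sub>v vec (m*p) (\<lambda>r. Z (r mod m) 0 (r div m)))"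
proof -
  define u where "u = vec (m*p) (\<lambda>r. Z (r mod m) 0 (r div m))"
  let ?B = "bcirc m m p Y"
  have T: "tprod m m 1 p Y Z i 0 k = (?B *\<^sub>v u) $ (k*m+i)" if "i<m" "k<p" for i k
  proof -
    have r: "k*m+i < m*p" using idx_lt that by blast
    have "col (tunfold m 1 p Z) 0 = u" by (simp add: tunfold_def u_def)
    then show ?thesis using r by (simp add: tprod_def tfold_def bcirc_def tunfold_def)
  qed
  have "tinner m 1 p Z (tprod m m 1 p Y Z) = (\<Sum>i<m. \<Sum>k<p. Z i 0 k * (?B *\<^sub>v u) $ (k*m+i))"
  proof -
    have one: "{..<(1::nat)} = {0}" by auto
    have "tinner m 1 p Z (tprod m m 1 p Y Z) = (\<Sum>i<m. \<Sum>k<p. Z i 0 k * tprod m m 1 p Y Z i 0 k)"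
      unfolding tinner_def one by simp
    also have "\<dots> = (\<Sum>i<m. \<Sum>k<p. Z i 0 k * (?B *\<^sub>v u) $ (k*m+i))"
      by (intro sum.cong refl) (simp add: T del: One_nat_def)
    finally show ?thesis .
  qed
  also have "\<dots> = (\<Sum>k<p. \<Sum>i<m. Z i 0 k * (?B *\<^sub>v u) $ (k*m+i))" by (rule sum.swap)
  also have "\<dots> = (\<Sum>k<p. \<Sum>i<m. u $ (k*m+i) * (?B *\<^sub>v u) $ (k*m+i))"
    by (intro sum.cong refl) (simp add: u_def idx_lt)
  also have "\<dots> = (\<Sum>r<m*p. u $ r * (?B *\<^sub>v u) $ r)" by (simp add: sum_split_mp[OF m])
  also have "\<dots> = u \<bullet> (?B *\<^sub>v u)"
    by (simp add: scalar_prod_def u_def bcirc_def lessThan_atLeast0)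
  finally show ?thesis unfolding u_def .
qed

lemma neg_mod_eq:
  fixes p a b :: nat assumes p: "0<p"
  shows "(p - nat ((int a - int b) mod int p)) mod p = nat ((int b - int a) mod int p)"
proof -
  have lt: "nat ((int a - int b) mod int p) < p" using p by (simp add: nat_less_iff)
  have "int ((p - nat ((int a - int b) mod int p)) mod p) = (- int (nat ((int a - int b) mod int p))) mod int p"
    using int_pl[OF p lt] .
  also have "\<dots> = (- ((int a - int b) mod int p)) mod int p" using p by simp
  also have "\<dots> = (- (int a - int b)) mod int p" by (simp add: mod_minus_eq)
  also have "\<dots> = (int b - int a) mod int p" by simp
  finally show ?thesis using p by simp
qed

lemma tpsd_to_psd:
  fixes m p :: nat and Y :: tensor
  assumes m: "0<m" and p: "0<p" and t: "tpsd m p Y"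
  shows "psd_mat (m*p) (bcirc m m p Y)"
  unfolding psd_mat_def
proof (intro conjI ballI)
  show "bcirc m m p Y \<in> carrier_mat (m*p) (m*p)" by (simp add: bcirc_def)
  show "transpose_mat (bcirc m m p Y) = bcirc m m p Y"
  proof (rule eq_matI)
    fix r c assume rc: "r < dim_row (bcirc m m p Y)" "c < dim_col (bcirc m m p Y)"
    then have rc': "r < m*p" "c < m*p" by (auto simp: bcirc_def)
    have sym: "tsym m p Y" using t by (simp add: tpsd_def)
    let ?k = "nat ((int (r div m) - int (c div m)) mod int p)"
    have k: "?k < p" using p by (simp add: nat_less_iff)
    have "ttrans p Y (r mod m) (c mod m) ?k = Y (r mod m) (c mod m) ?k"
      using sym k m unfolding tsym_def by simp
    then have "Y (c mod m) (r mod m) (nat ((int (c div m) - int (r div m)) mod int p)) = Y (r mod m) (c mod m) ?k"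
      by (simp add: ttrans_def neg_mod_eq[OF p])
    then show "transpose_mat (bcirc m m p Y) $$ (r, c) = bcirc m m p Y $$ (r, c)"
      using rc' by (simp add: bcirc_def)
  qed (auto simp: bcirc_def)
next
  fix u :: "real vec" assume u: "u \<in> carrier_vec (m*p)"
  define Z :: tensor where "Z = (\<lambda>i j k. u $ (k*m+i))"
  have "vec (m*p) (\<lambda>r. Z (r mod m) 0 (r div m)) = u"
    using u by (intro eq_vecI) (auto simp: Z_def)
  moreover have "tinner m 1 p Z (tprod m m 1 p Y Z) \<ge> 0" using t by (simp add: tpsd_def)
  ultimately show "u \<bullet> (bcirc m m p Y *\<^sub>v u) \<ge> 0" using quad_form[OF m p, of Z Y] by simp
qed

lemma psd_to_tpsd:
  fixes m p :: nat and Y :: tensor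
  assumes m: "0<m" and p: "0<p" and ps: "psd_mat (m*p) (bcirc m m p Y)"
  shows "tpsd m p Y"
  unfolding tpsd_def
proof (intro conjI allI)
  show "tsym m p Y" unfolding tsym_def
  proof (intro allI impI)
    fix i j k assume ijk: "i<m" "j<m" "k<p"
    have r: "k*m+i < m*p" using idx_lt ijk by blast
    have "m \<le> m*p" using p by simp
    then have jr: "j < m*p" using ijk by linarith
    have tr: "transpose_mat (bcirc m m p Y) = bcirc m m p Y" using ps by (simp add: psd_mat_def)
    have "transpose_mat (bcirc m m p Y) $$ (k*m+i, j) = bcirc m m p Y $$ (k*m+i, j)" using tr by simp
    then have "Y j i (nat ((int 0 - int k) mod int p)) = Y i j (nat ((int k - int 0) mod int p))"
      using r jr ijk by (simp add: bcirc_def)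
    moreover have "nat ((int 0 - int k) mod int p) = (p - k) mod p" using int_pl[OF p ijk(3)] by simp
    ultimately show "ttrans p Y i j k = Y i j k" using ijk by (simp add: ttrans_def)
  qed
next
  fix Z :: tensor
  let ?u = "vec (m*p) (\<lambda>r. Z (r mod m) 0 (r div m))"
  have "?u \<bullet> (bcirc m m p Y *\<^sub>v ?u) \<ge> 0" using ps by (simp add: psd_mat_def)
  then show "tinner m 1 p Z (tprod m m 1 p Y Z) \<ge> 0" using quad_form[OF m p, of Z Y] by simp
qed

theorem mainTheorem17:
  fixes n d m p N :: nat
    and c :: "(nat \<Rightarrow> nat) \<Rightarrow> real"
    and omon :: "nat \<Rightarrow> (nat \<Rightarrow> nat)"
  assumes deg: "\<exists>\<alpha>\<in>multi_idx n (2*d). absidx n \<alpha> = 2*d \<and> c \<alpha> \<noteq> 0"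
    and N_def: "N = (n + d) choose d"
    and mon_bij: "bij_betw omon {0..<N} (multi_idx n d)"
    and mon_first: "omon 0 = (\<lambda>_. 0)"
    and Nmp: "N = m * p" and m_pos: "m \<ge> 1" and p_ne1: "p \<noteq> 1"
    and sdp_ne: "sdp_feasible n d c N omon \<noteq> {}"
    and sdp_bdd: "bdd_above (sdp_feasible n d c N omon)"
    and sdp_att: "Sup (sdp_feasible n d c N omon) \<in> sdp_feasible n d c N omon"
    and tsdp_ne: "tsdp_feasible n d c N omon m p \<noteq> {}"
    and tsdp_bdd: "bdd_above (tsdp_feasible n d c N omon m p)"
    and tsdp_att: "Sup (tsdp_feasible n d c N omon m p) \<in> tsdp_feasible n d c N omon m p"
  shows "c (\<lambda>_. 0) - Sup (sdp_feasible n d c N omon)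
           \<le> c (\<lambda>_. 0) - Sup (tsdp_feasible n d c N omon m p)
       \<and> (c (\<lambda>_. 0) - Sup (sdp_feasible n d c N omon)
             = c (\<lambda>_. 0) - Sup (tsdp_feasible n d c N omon m p)
          \<longleftrightarrow> (\<exists>Xs. psd_mat N Xs
                 \<and> (\<forall>x. poly_eval n (2*d) c x - Sup (sdp_feasible n d c N omon)
                        = Xs \<bullet>\<^sub>F outer_self (monvec n N omon x))
                 \<and> (\<exists>\<Y>::tensor. Xs = bcirc m m p \<Y>)))"
proof -
  let ?S = "sdp_feasible n d c N omon"
  let ?T = "tsdp_feasible n d c N omon m p"
  have "0 < N" unfolding N_def by simp
  then have p: "0 < p" using Nmp by (cases p) auto
  have m: "0 < m" using m_pos by simp
  have dimv: "dim_vec (monvec n N omon x) = m*p" for x by (simp add: monvec_def Nmp)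
  have sub: "?T \<subseteq> ?S"
  proof
    fix g assume "g \<in> ?T"
    then obtain Y where Y: "tpsd m p Y" and e: "\<forall>x. poly_eval n (2*d) c x - g =
        tinner m m p Y (tprod m 1 m p (tfold_vec m (monvec n N omon x))
                                       (ttrans p (tfold_vec m (monvec n N omon x))))"
      unfolding tsdp_feasible_def by blast
    have "psd_mat N (bcirc m m p Y)" using tpsd_to_psd[OF m p Y] Nmp by simp
    moreover have "\<forall>x. poly_eval n (2*d) c x - g = bcirc m m p Y \<bullet>\<^sub>F outer_self (monvec n N omon x)"
      using e key_identity[OF dimv m p] by simp
    ultimately show "g \<in> ?S" unfolding sdp_feasible_def by blast
  qed
  have le: "Sup ?T \<le> Sup ?S" by (rule cSup_subset_mono[OF tsdp_ne sdp_bdd sub])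
  have iff: "(c (\<lambda>_. 0) - Sup ?S = c (\<lambda>_. 0) - Sup ?T) \<longleftrightarrow> (\<exists>Xs. psd_mat N Xs
                 \<and> (\<forall>x. poly_eval n (2*d) c x - Sup ?S
                        = Xs \<bullet>\<^sub>F outer_self (monvec n N omon x))
                 \<and> (\<exists>\<Y>::tensor. Xs = bcirc m m p \<Y>))"
  proof
    assume "c (\<lambda>_. 0) - Sup ?S = c (\<lambda>_. 0) - Sup ?T"
    then have eq: "Sup ?S = Sup ?T" by simp
    obtain Y where Y: "tpsd m p Y" and e: "\<forall>x. poly_eval n (2*d) c x - Sup ?T =
        tinner m m p Y (tprod m 1 m p (tfold_vec m (monvec n N omon x))
                                       (ttrans p (tfold_vec m (monvec n N omon x))))"
      using tsdp_att unfolding tsdp_feasible_def by blast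
    have "psd_mat N (bcirc m m p Y)" using tpsd_to_psd[OF m p Y] Nmp by simp
    moreover have "\<forall>x. poly_eval n (2*d) c x - Sup ?S = bcirc m m p Y \<bullet>\<^sub>F outer_self (monvec n N omon x)"
      using e key_identity[OF dimv m p] eq by simp
    ultimately show "\<exists>Xs. psd_mat N Xs
                 \<and> (\<forall>x. poly_eval n (2*d) c x - Sup ?S
                        = Xs \<bullet>\<^sub>F outer_self (monvec n N omon x))
                 \<and> (\<exists>\<Y>::tensor. Xs = bcirc m m p \<Y>)" by blast
  next
    assume "\<exists>Xs. psd_mat N Xs
                 \<and> (\<forall>x. poly_eval n (2*d) c x - Sup ?S
                        = Xs \<bullet>\<^sub>F outer_self (monvec n N omon x))
                 \<and> (\<exists>\<Y>::tensor. Xs = bcirc m m p \<Y>)"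
    then obtain Y where ps: "psd_mat N (bcirc m m p Y)" and
      e: "\<forall>x. poly_eval n (2*d) c x - Sup ?S = bcirc m m p Y \<bullet>\<^sub>F outer_self (monvec n N omon x)"
      by blast
    have Y: "tpsd m p Y" using psd_to_tpsd[OF m p] ps Nmp by simp
    have "\<forall>x. poly_eval n (2*d) c x - Sup ?S =
        tinner m m p Y (tprod m 1 m p (tfold_vec m (monvec n N omon x))
                                       (ttrans p (tfold_vec m (monvec n N omon x))))"
      using e key_identity[OF dimv m p] by simp
    then have "Sup ?S \<in> ?T" using Y unfolding tsdp_feasible_def by blast
    then have "Sup ?S \<le> Sup ?T" by (rule cSup_upper[OF _ tsdp_bdd])
    then show "c (\<lambda>_. 0) - Sup ?S = c (\<lambda>_. 0) - Sup ?T" using le by simp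
  qed
  show ?thesis using le iff by simp
qed

end
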